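(* Let $p_{01},p_{11},p_{02},p_{12}\in\overline{\mathbb C}$ with $p_{02}=p_{12}$, such that $p_{02},p_{01},p_{11}$ are three distinct points. Let $m_0(\varepsilon),m_1(\varepsilon)$, $\varepsilon>0$, be hyperbolic Möbius transformations, with $\mu_0,\mu_1$ their multipliers at the attracting fixed points. Let $p_{01,\varepsilon},p_{12,\varepsilon}$ be the attracting and $p_{02,\varepsilon},p_{11,\varepsilon}$ the repelling fixed points of $m_0,m_1$ respectively. Assume $p_{ij,\varepsilon}\to p_{ij}$ and $\mu_i\to0$ as $\varepsilon\to0$. Assume $m_0m_1$ converges to a Möbius transformation $m$ such that for every $k\in\mathbb Z\setminus\{0\}$, $i\in\{0,1\}$, $j\in\{1,2\}$, the point $m^kp_{ij}$ differs from every $p_{ls}$ with $(l,s)\ne(i,j)$. Let $\widetilde m=m_{j_N}^{s_N}\cdots m_{j_1}^{s_1}$ be a reduced word such that $m_{j_N}^{s_N}m_{j_{N-1}}^{s_{N-1}}\ne(m_0m_1)^{\pm1}$ literally. Let $x\in\overline{\mathbb C}$ be such that $m^sx\ne p_{ij}$ for all $s=-N,\dots,N$, $i=0,1$, $j=1,2$. Then $\widetilde m x$ converges, as $\varepsilon\to0$, to the limit of the attracting fixed point of $m_{j_N}^{s_N}$.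
   Context: A Möbius transformation is hyperbolic if it has a repelling fixed point; then it has a unique attracting fixed point (the attracting fixed point of its inverse is its repeller). The multiplier at a fixed point is the derivative there. A word $m_{j_N}^{s_N}\cdots m_{j_1}^{s_1}$ has $N\ge1$, $j_l\in\{0,1\}$, $s_l=\pm1$, with no adjacent pair literally of the form $m_jm_j^{-1}$ or $m_j^{-1}m_j$. It is reduced if it is not literally $m_0m_1\cdots m_0m_1$ nor $m_1^{-1}m_0^{-1}\cdots m_1^{-1}m_0^{-1}$. The condition on the last two letters is understood literally: the pair $m_{j_N}^{s_N}m_{j_{N-1}}^{s_{N-1}}$ is neither $m_0m_1$ nor $m_1^{-1}m_0^{-1}$ (for $N=1$ the condition is vacuous). *)

theory Defs
  imports "HOL-Analysis.Analysis"
begin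

text \<open>The extended complex plane: None is the point at infinity.
  Its topology is the one of the unit sphere in R^3, via inverse stereographic projection.\<close>

type_synonym ecomplex = "complex option"

definition to_sphere :: "ecomplex \<Rightarrow> real \<times> real \<times> real" where
  "to_sphere z = (case z of
      None \<Rightarrow> (0, 0, 1)
    | Some w \<Rightarrow> (2 * Re w / (1 + (cmod w)^2), 2 * Im w / (1 + (cmod w)^2),
                 ((cmod w)^2 - 1) / ((cmod w)^2 + 1)))"

definition sconv :: "('b \<Rightarrow> ecomplex) \<Rightarrow> ecomplex \<Rightarrow> 'b filter \<Rightarrow> bool" where
  "sconv f L F \<longleftrightarrow> ((\<lambda>e. to_sphere (f e)) \<longlongrightarrow> to_sphere L) F"

type_synonym mat = "complex \<times> complex \<times> complex \<times> complex"

definition mdet :: "mat \<Rightarrow> complex" where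
  "mdet M = (case M of (a, b, c, d) \<Rightarrow> a * d - b * c)"

definition mmul :: "mat \<Rightarrow> mat \<Rightarrow> mat" where
  "mmul M N = (case M of (a, b, c, d) \<Rightarrow> case N of (a', b', c', d') \<Rightarrow>
      (a * a' + b * c', a * b' + b * d', c * a' + d * c', c * b' + d * d'))"

definition mid :: mat where "mid = (1, 0, 0, 1)"

definition minv :: "mat \<Rightarrow> mat" where
  "minv M = (case M of (a, b, c, d) \<Rightarrow> (d, -b, -c, a))"

definition msmul :: "complex \<Rightarrow> mat \<Rightarrow> mat" where
  "msmul l M = (case M of (a, b, c, d) \<Rightarrow> (l * a, l * b, l * c, l * d))"

definition mpow :: "mat \<Rightarrow> int \<Rightarrow> mat" where
  "mpow M k = (if 0 \<le> k then ((mmul M) ^^ nat k) mid else ((mmul (minv M)) ^^ nat (- k)) mid)"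

definition mob_app :: "mat \<Rightarrow> ecomplex \<Rightarrow> ecomplex" where
  "mob_app M z = (case M of (a, b, c, d) \<Rightarrow>
     (case z of
        None \<Rightarrow> (if c = 0 then None else Some (a / c))
      | Some w \<Rightarrow> (if c * w + d = 0 then None else Some ((a * w + b) / (c * w + d)))))"

definition is_fixed :: "mat \<Rightarrow> ecomplex \<Rightarrow> bool" where
  "is_fixed M z \<longleftrightarrow> mob_app M z = z"

text \<open>Multiplier at a fixed point = derivative there (in the chart 1/z at infinity,
  where the map reads w \<mapsto> 1 / f(1/w) = (c + d w)/(a + b w)).\<close>
definition multiplier :: "mat \<Rightarrow> ecomplex \<Rightarrow> complex" where
  "multiplier M z = (case M of (a, b, c, d) \<Rightarrow>
     (case z of
        None \<Rightarrow> deriv (\<lambda>w. (c + d * w) / (a + b * w)) 0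
      | Some p \<Rightarrow> deriv (\<lambda>w. (a * w + b) / (c * w + d)) p))"

definition attracting_fp :: "mat \<Rightarrow> ecomplex \<Rightarrow> bool" where
  "attracting_fp M z \<longleftrightarrow> is_fixed M z \<and> cmod (multiplier M z) < 1"

definition repelling_fp :: "mat \<Rightarrow> ecomplex \<Rightarrow> bool" where
  "repelling_fp M z \<longleftrightarrow> is_fixed M z \<and> cmod (multiplier M z) > 1"

definition hyperbolic :: "mat \<Rightarrow> bool" where
  "hyperbolic M \<longleftrightarrow> (\<exists>z. repelling_fp M z)"

text \<open>A word m_{j_N}^{s_N} ... m_{j_1}^{s_1} is the list w with w ! (l-1) = (j_l, s_l),
  i.e. the head of the list is the rightmost letter (applied first), last w is the leftmost.\<close>

definition letter :: "mat \<Rightarrow> mat \<Rightarrow> nat \<times> int \<Rightarrow> mat" where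
  "letter M0 M1 js = (case js of (j, s) \<Rightarrow>
     (let M = (if j = 0 then M0 else M1) in if s = 1 then M else minv M))"

definition word_mat :: "mat \<Rightarrow> mat \<Rightarrow> (nat \<times> int) list \<Rightarrow> mat" where
  "word_mat M0 M1 w = foldl (\<lambda>acc l. mmul (letter M0 M1 l) acc) mid w"

definition is_word :: "(nat \<times> int) list \<Rightarrow> bool" where
  "is_word w \<longleftrightarrow> w \<noteq> [] \<and> (\<forall>l \<in> set w. fst l \<in> {0, 1} \<and> snd l \<in> {1, -1})
     \<and> (\<forall>i. Suc i < length w \<longrightarrow>
           \<not> (fst (w ! Suc i) = fst (w ! i) \<and> snd (w ! Suc i) = - snd (w ! i)))"

text \<open>Reduced: not literally m_0 m_1 ... m_0 m_1 nor m_1^{-1} m_0^{-1} ... m_1^{-1} m_0^{-1}.\<close>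
definition reduced_word :: "(nat \<times> int) list \<Rightarrow> bool" where
  "reduced_word w \<longleftrightarrow> is_word w \<and>
     (\<forall>k::nat. w \<noteq> concat (replicate k [(1, 1), (0, 1)])
             \<and> w \<noteq> concat (replicate k [(0, -1), (1, -1)]))"

end

theory Submission
  imports Defs
begin

type_synonym vec = "complex \<times> complex"

definition mv :: "mat \<Rightarrow> vec \<Rightarrow> vec" where
  "mv N x = (fst N * fst x + fst (snd N) * snd x, fst (snd (snd N)) * fst x + snd (snd (snd N)) * snd x)"
definition sv :: "complex \<Rightarrow> vec \<Rightarrow> vec" where "sv c x = (c * fst x, c * snd x)"
definition projv :: "vec \<Rightarrow> ecomplex" where
  "projv x = (if snd x = 0 then None else Some (fst x / snd x))"
definition det2 :: "vec \<Rightarrow> vec \<Rightarrow> complex" where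
  "det2 x y = fst x * snd y - fst y * snd x"
definition nrep :: "ecomplex \<Rightarrow> vec" where
  "nrep z = (case z of None \<Rightarrow> (1, 0) | Some w \<Rightarrow> (w, 1))"

lemma mat_cases4: obtains a b c d where "(A::mat) = (a,b,c,d)" by (cases A) auto

lemma mv_mmul: "mv (mmul A B) x = mv A (mv B x)"
  by (cases A rule: mat_cases4; cases B rule: mat_cases4; cases x) (simp add: mmul_def mv_def algebra_simps)
lemma mv_mid[simp]: "mv mid x = x" by (simp add: mid_def mv_def)
lemma mv_minv1: "mv (minv A) (mv A x) = sv (mdet A) x"
  by (cases A rule: mat_cases4; cases x) (simp add: minv_def mv_def sv_def mdet_def algebra_simps)
lemma mv_minv2: "mv A (mv (minv A) x) = sv (mdet A) x"
  by (cases A rule: mat_cases4; cases x) (simp add: minv_def mv_def sv_def mdet_def algebra_simps)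
lemma mv_sv: "mv A (sv c x) = sv c (mv A x)"
  by (cases A rule: mat_cases4; cases x) (simp add: mv_def sv_def algebra_simps)
lemma mv_msmul: "mv (msmul c A) x = sv c (mv A x)"
  by (cases A rule: mat_cases4; cases x) (simp add: msmul_def mv_def sv_def algebra_simps)
lemma sv_sv: "sv a (sv b x) = sv (a*b) x" by (simp add: sv_def)
lemma sv_1[simp]: "sv 1 x = x" by (simp add: sv_def)
lemma det2_mv: "det2 (mv A x) (mv A y) = mdet A * det2 x y"
  by (cases A rule: mat_cases4; cases x; cases y) (simp add: mv_def det2_def mdet_def algebra_simps)
lemma minv_mmul: "minv (mmul A B) = mmul (minv B) (minv A)"
  by (cases A rule: mat_cases4; cases B rule: mat_cases4) (simp add: mmul_def minv_def algebra_simps)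
lemma minv_msmul: "minv (msmul l A) = msmul l (minv A)"
  by (cases A rule: mat_cases4) (simp add: msmul_def minv_def)
lemma mdet_mmul: "mdet (mmul A B) = mdet A * mdet B"
  by (cases A rule: mat_cases4; cases B rule: mat_cases4) (simp add: mmul_def mdet_def algebra_simps)
lemma mdet_minv[simp]: "mdet (minv A) = mdet A"
  by (cases A rule: mat_cases4) (simp add: minv_def mdet_def algebra_simps)
lemma mdet_mid[simp]: "mdet mid = 1" by (simp add: mid_def mdet_def)
lemma sv_eq0: "sv c x = (0,0) \<longleftrightarrow> c = 0 \<or> x = (0,0)"
  by (cases x) (auto simp: sv_def)
lemma mv_nz: assumes "mdet A \<noteq> 0" "x \<noteq> (0,0)" shows "mv A x \<noteq> (0,0)"
proof
  assume "mv A x = (0,0)"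
  then have "mv (minv A) (mv A x) = (0,0)" by (simp add: mv_def)
  then show False using assms by (simp add: mv_minv1 sv_eq0)
qed
lemma projv_sv: "c \<noteq> 0 \<Longrightarrow> projv (sv c x) = projv x"
  by (cases x) (simp add: projv_def sv_def)
lemma projv_eq_iff: assumes "x \<noteq> (0,0)" "y \<noteq> (0,0)"
  shows "projv x = projv y \<longleftrightarrow> det2 x y = 0"
  using assms by (cases x; cases y) (auto simp: projv_def det2_def field_simps)
lemma mob_app_projv: assumes "x \<noteq> (0,0)" shows "mob_app A (projv x) = projv (mv A x)"
proof -
  obtain a b c d where A: "A = (a,b,c,d)" by (rule mat_cases4)
  obtain u v where x: "x = (u,v)" by (cases x)
  show ?thesis
  proof (cases "v = 0")
    case True
    then have "u \<noteq> 0" using assms x by auto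
    then show ?thesis using True by (simp add: A x projv_def mob_app_def mv_def)
  next
    case False
    have e1: "a * u / v + b = (a * u + b * v) / v" "c * u / v + d = (c * u + d * v) / v" using False by (simp_all add: field_simps)
    show ?thesis using False by (simp add: A x projv_def mob_app_def mv_def e1)
  qed
qed
lemma nrep_nz[simp]: "nrep z \<noteq> (0,0)" by (cases z) (auto simp: nrep_def)
lemma projv_nrep[simp]: "projv (nrep z) = z" by (cases z) (auto simp: nrep_def projv_def)
lemma mdet_msmul: "mdet (msmul c A) = c^2 * mdet A"
  by (cases A rule: mat_cases4) (simp add: msmul_def mdet_def algebra_simps power2_eq_square)

definition vconv :: "('b \<Rightarrow> vec) \<Rightarrow> ecomplex \<Rightarrow> 'b filter \<Rightarrow> bool" where
 "vconv G L F \<longleftrightarrow> (\<exists>c y. y \<noteq> (0,0) \<and> projv y = L \<and> eventually (\<lambda>e. c e \<noteq> 0) F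
     \<and> ((\<lambda>e. sv (c e) (G e)) \<longlongrightarrow> y) F)"

lemma tendsto_mv: "(N \<longlongrightarrow> N0) F \<Longrightarrow> (x \<longlongrightarrow> x0) F \<Longrightarrow> ((\<lambda>e. mv (N e) (x e)) \<longlongrightarrow> mv N0 x0) F"
  unfolding mv_def by (intro tendsto_intros)
lemma tendsto_sv: "(c \<longlongrightarrow> c0) F \<Longrightarrow> (x \<longlongrightarrow> x0) F \<Longrightarrow> ((\<lambda>e. sv (c e) (x e)) \<longlongrightarrow> sv c0 x0) F"
  unfolding sv_def by (intro tendsto_intros)
lemma tendsto_minv: "(N \<longlongrightarrow> N0) F \<Longrightarrow> ((\<lambda>e. minv (N e)) \<longlongrightarrow> minv N0) F"
proof -
  have m: "minv A = (snd (snd (snd A)), - fst (snd A), - fst (snd (snd A)), fst A)" for A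
    by (cases A rule: mat_cases4) (simp add: minv_def)
  show "(N \<longlongrightarrow> N0) F \<Longrightarrow> ((\<lambda>e. minv (N e)) \<longlongrightarrow> minv N0) F"
    unfolding m by (intro tendsto_intros)
qed

lemma vconv_const: "x \<noteq> (0,0) \<Longrightarrow> vconv (\<lambda>e. x) (projv x) F"
  unfolding vconv_def by (rule exI[of _ "\<lambda>e. 1"], rule exI[of _ x]) auto

lemma vconv_mat:
  assumes G: "vconv G q F" and N: "((\<lambda>e. msmul (l e) (N e)) \<longlongrightarrow> N0) F"
    and l: "eventually (\<lambda>e. l e \<noteq> 0) F" and d: "mdet N0 \<noteq> 0"
  shows "vconv (\<lambda>e. mv (N e) (G e)) (mob_app N0 q) F"
proof -
  obtain c y where y: "y \<noteq> (0,0)" "projv y = q" "eventually (\<lambda>e. c e \<noteq> 0) F"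
    "((\<lambda>e. sv (c e) (G e)) \<longlongrightarrow> y) F" using G unfolding vconv_def by blast
  have "((\<lambda>e. mv (msmul (l e) (N e)) (sv (c e) (G e))) \<longlongrightarrow> mv N0 y) F"
    by (rule tendsto_mv[OF N y(4)])
  moreover have "mv (msmul (l e) (N e)) (sv (c e) (G e)) = sv (l e * c e) (mv (N e) (G e))" for e
    by (simp add: mv_msmul mv_sv sv_sv mult.commute)
  ultimately have t: "((\<lambda>e. sv (l e * c e) (mv (N e) (G e))) \<longlongrightarrow> mv N0 y) F" by simp
  have ev: "eventually (\<lambda>e. l e * c e \<noteq> 0) F" using l y(3) by eventually_elim simp
  show ?thesis unfolding vconv_def
    apply (rule exI[of _ "\<lambda>e. l e * c e"], rule exI[of _ "mv N0 y"])
    using mv_nz[OF d y(1)] mob_app_projv[OF y(1), of N0] y(2) t ev by simp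
qed

definition S :: "vec \<Rightarrow> real \<times> real \<times> real" where
  "S x = (2 * Re (fst x * cnj (snd x)) / ((cmod (fst x))^2 + (cmod (snd x))^2),
          2 * Im (fst x * cnj (snd x)) / ((cmod (fst x))^2 + (cmod (snd x))^2),
          ((cmod (fst x))^2 - (cmod (snd x))^2) / ((cmod (fst x))^2 + (cmod (snd x))^2))"

lemma a1: "b > 0 \<Longrightarrow> 2 * (R / b^2) / (1 + (a / b)^2) = 2 * R / (a^2 + b^2)" for a b R :: real
proof -
  assume b: "b > 0"
  have "1 + (a/b)^2 = (a^2 + b^2) / b^2" using b by (simp add: power_divide field_simps)
  then show ?thesis using b by (simp add: field_simps)
qed
lemma a2: "b > 0 \<Longrightarrow> ((a / b)^2 - 1) / ((a / b)^2 + 1) = (a^2 - b^2) / (a^2 + b^2)" for a b :: real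
proof -
  assume b: "b > 0"
  have "(a/b)^2 + 1 = (a^2 + b^2) / b^2" "(a/b)^2 - 1 = (a^2 - b^2) / b^2" using b by (simp_all add: power_divide field_simps)
  then show ?thesis using b by simp
qed

lemma to_sphere_projv: assumes "x \<noteq> (0,0)" shows "to_sphere (projv x) = S x"
proof -
  obtain u v where x: "x = (u,v)" by (cases x)
  show ?thesis
  proof (cases "v = 0")
    case True
    then have "u \<noteq> 0" using assms x by auto
    then show ?thesis using True by (simp add: x projv_def to_sphere_def S_def)
  next
    case False
    have nv: "(cmod v)^2 \<noteq> 0" using False by simp
    have d: "u / v = u * cnj v / complex_of_real ((cmod v)^2)"
      using complex_div_cnj[of u v] by simp
    have r: "Re (u / v) = Re (u * cnj v) / (cmod v)^2" "Im (u / v) = Im (u * cnj v) / (cmod v)^2"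
      unfolding d by (simp_all add: Re_divide_of_real Im_divide_of_real)
    have c: "cmod (u / v) = cmod u / cmod v" by (simp add: norm_divide)
    have b: "0 < cmod v" using False by simp
    have "projv x = Some (u / v)" using False by (simp add: x projv_def)
    then have "to_sphere (projv x) = (2 * Re (u/v) / (1 + (cmod (u/v))^2), 2 * Im (u/v) / (1 + (cmod (u/v))^2),
                 ((cmod (u/v))^2 - 1) / ((cmod (u/v))^2 + 1))"
      by (simp only: to_sphere_def option.case)
    also have "\<dots> = S x" unfolding r c a1[OF b] a2[OF b] by (simp only: S_def x fst_conv snd_conv)
    finally show ?thesis .
  qed
qed

lemma tendsto_S: assumes "(x \<longlongrightarrow> x0) F" "x0 \<noteq> (0,0)" shows "((\<lambda>e. S (x e)) \<longlongrightarrow> S x0) F"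
proof -
  have n: "(cmod (fst x0))^2 + (cmod (snd x0))^2 \<noteq> 0"
    using assms(2) by (cases x0) (auto simp: add_nonneg_eq_0_iff)
  show ?thesis unfolding S_def using n by (intro tendsto_intros assms(1)) auto
qed

lemma vconv_sconv: assumes "vconv G L F" shows "sconv (\<lambda>e. projv (G e)) L F"
proof -
  obtain c y where y: "y \<noteq> (0,0)" "projv y = L" "eventually (\<lambda>e. c e \<noteq> 0) F"
    "((\<lambda>e. sv (c e) (G e)) \<longlongrightarrow> y) F" using assms unfolding vconv_def by blast
  have t: "((\<lambda>e. S (sv (c e) (G e))) \<longlongrightarrow> S y) F" by (rule tendsto_S[OF y(4) y(1)])
  have ne: "eventually (\<lambda>e. sv (c e) (G e) \<noteq> (0,0)) F"
    using tendsto_imp_eventually_ne[OF y(4) y(1)] .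
  have "eventually (\<lambda>e. S (sv (c e) (G e)) = to_sphere (projv (G e))) F"
    using ne y(3) by eventually_elim (metis projv_sv sv_eq0 to_sphere_projv)
  from tendsto_cong[OF this] t have "((\<lambda>e. to_sphere (projv (G e))) \<longlongrightarrow> S y) F" by simp
  then show ?thesis unfolding sconv_def using to_sphere_projv[OF y(1)] y(2) by simp
qed

definition gS :: "real \<times> real \<times> real \<Rightarrow> complex" where
  "gS t = Complex (fst t) (fst (snd t)) / complex_of_real (1 - snd (snd t))"
definition hS :: "real \<times> real \<times> real \<Rightarrow> complex" where
  "hS t = Complex (fst t) (- fst (snd t)) / complex_of_real (1 + snd (snd t))"

lemma ts_Some: "to_sphere (Some w) = (2 * Re w / (1 + (cmod w)^2), 2 * Im w / (1 + (cmod w)^2),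
                 ((cmod w)^2 - 1) / ((cmod w)^2 + 1))"
  by (simp add: to_sphere_def)

lemma ofr_ne[simp]: "(1::complex) + complex_of_real z = 0 \<longleftrightarrow> z = -1"
  "(1::complex) - complex_of_real z = 0 \<longleftrightarrow> z = 1"
  by (simp_all add: complex_eq_iff; linarith)+

lemma gS_inv: "gS (to_sphere (Some w)) = w"
proof -
  define n where "n = (cmod w)^2"
  have n0: "n \<ge> 0" unfolding n_def by simp
  have c: "Complex (2 * Re w / (1 + n)) (2 * Im w / (1 + n)) = complex_of_real (2 / (1 + n)) * w"
    by (simp add: complex_eq_iff)
  have z: "1 - (n - 1) / (n + 1) = 2 / (1 + n)" using n0 by (simp add: field_simps)
  show ?thesis unfolding gS_def ts_Some n_def[symmetric] using n0
    by (simp add: c z)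
qed

lemma hS_inv: assumes "w \<noteq> 0" shows "hS (to_sphere (Some w)) = 1 / w"
proof -
  define n where "n = (cmod w)^2"
  have n0: "n > 0" unfolding n_def using assms by simp
  have c: "Complex (2 * Re w / (1 + n)) (- (2 * Im w / (1 + n))) = complex_of_real (2 / (1 + n)) * cnj w"
    by (simp add: complex_eq_iff)
  have z: "1 + (n - 1) / (n + 1) = (2 / (1 + n)) * n" using n0 by (simp add: field_simps)
  have d: "1 / w = cnj w / complex_of_real n" unfolding n_def using complex_div_cnj[of 1 w] by simp
  show ?thesis unfolding gS_def hS_def ts_Some n_def[symmetric] d using n0
    by (simp add: c z)
qed

lemma ts_Z_None: "snd (snd (to_sphere None)) = 1" by (simp add: to_sphere_def)
lemma ts_Z_Some_lt: "snd (snd (to_sphere (Some w))) < 1"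
proof -
  have p: "0 < (cmod w)^2 + 1" by (simp add: add_nonneg_pos)
  show ?thesis using p by (simp add: to_sphere_def divide_less_eq)
qed
lemma ts_Z_Some0: "snd (snd (to_sphere (Some 0))) = -1" by (simp add: to_sphere_def)

lemma sconv_rep: assumes "sconv f L F"
  shows "\<exists>G y. y \<noteq> (0,0) \<and> projv y = L \<and> (G \<longlongrightarrow> y) F \<and> eventually (\<lambda>e. G e \<noteq> (0,0) \<and> projv (G e) = f e) F"
proof -
  define T where "T e = to_sphere (f e)" for e
  have T: "(T \<longlongrightarrow> to_sphere L) F" using assms unfolding sconv_def T_def by simp
  have TZ: "((\<lambda>e. snd (snd (T e))) \<longlongrightarrow> snd (snd (to_sphere L))) F"
    by (intro tendsto_intros T)
  show ?thesis
  proof (cases L)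
    case (Some l)
    have lt: "snd (snd (to_sphere L)) < 1" using Some ts_Z_Some_lt by simp
    have ev: "eventually (\<lambda>e. snd (snd (T e)) < 1) F" using order_tendstoD(2)[OF TZ lt] .
    have gt: "((\<lambda>e. gS (T e)) \<longlongrightarrow> gS (to_sphere L)) F"
      unfolding gS_def using lt by (intro tendsto_intros T) auto
    have gl: "gS (to_sphere L) = l" using Some gS_inv by simp
    have t2: "((\<lambda>e. (gS (T e), 1::complex)) \<longlongrightarrow> (l, 1)) F"
      using gt gl by (intro tendsto_intros) auto
    have ev2: "eventually (\<lambda>e. (gS (T e), 1::complex) \<noteq> (0,0) \<and> projv (gS (T e), 1) = f e) F"
      using ev
    proof eventually_elim
      case (elim e)
      then obtain v where v: "f e = Some v" using ts_Z_None unfolding T_def by (cases "f e") auto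
      then show ?case by (simp add: T_def gS_inv projv_def)
    qed
    show ?thesis
      apply (rule exI[of _ "\<lambda>e. (gS (T e), 1)"], rule exI[of _ "(l, 1)"])
      using t2 ev2 Some by (simp add: projv_def)
  next
    case None
    have lt: "snd (snd (to_sphere L)) > -1" using None ts_Z_None by simp
    have ev: "eventually (\<lambda>e. snd (snd (T e)) > -1) F" using order_tendstoD(1)[OF TZ lt] .
    have gt: "((\<lambda>e. hS (T e)) \<longlongrightarrow> hS (to_sphere L)) F"
      unfolding hS_def using lt by (intro tendsto_intros T) auto
    have gl: "hS (to_sphere L) = 0" using None by (simp add: hS_def to_sphere_def complex_eq_iff)
    have t2: "((\<lambda>e. (1::complex, hS (T e))) \<longlongrightarrow> (1, 0)) F"
      using gt gl by (intro tendsto_intros) auto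
    have ev2: "eventually (\<lambda>e. (1::complex, hS (T e)) \<noteq> (0,0) \<and> projv (1, hS (T e)) = f e) F"
      using ev
    proof eventually_elim
      case (elim e)
      show ?case
      proof (cases "f e")
        case None
        then show ?thesis by (simp add: T_def hS_def to_sphere_def projv_def complex_eq_iff)
      next
        case (Some v)
        then have "v \<noteq> 0" using elim ts_Z_Some0 unfolding T_def by auto
        then show ?thesis using Some by (simp add: T_def hS_inv projv_def)
      qed
    qed
    show ?thesis
      apply (rule exI[of _ "\<lambda>e. (1, hS (T e))"], rule exI[of _ "(1, 0)"])
      using t2 ev2 None by (simp add: projv_def)
  qed
qed

lemma deriv_frac: assumes "c*p+d \<noteq> 0"
  shows "deriv (\<lambda>w. (a*w+b)/(c*w+d)) p = (a*d - b*c)/(c*p+d)^2"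
proof (rule DERIV_imp_deriv)
  show "((\<lambda>w. (a*w+b)/(c*w+d)) has_field_derivative (a*d - b*c)/(c*p+d)^2) (at p)"
    using assms by (auto intro!: derivative_eq_intros simp: power2_eq_square field_simps)
qed

lemma deriv_frac0: assumes "a \<noteq> 0"
  shows "deriv (\<lambda>w. (c + d*w)/(a + b*w)) 0 = (a*d - b*c)/a^2"
proof (rule DERIV_imp_deriv)
  show "((\<lambda>w. (c + d*w)/(a + b*w)) has_field_derivative (a*d - b*c)/a^2) (at 0)"
    using assms by (auto intro!: derivative_eq_intros simp: power2_eq_square field_simps)
qed

lemma fixed_eigen: assumes "mdet A \<noteq> 0" "is_fixed A z" "x \<noteq> (0,0)" "projv x = z"
  shows "\<exists>l. l \<noteq> 0 \<and> mv A x = sv l x \<and> multiplier A z = mdet A / l^2"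
proof -
  obtain a b c d where A: "A = (a,b,c,d)" by (rule mat_cases4)
  obtain u v where x: "x = (u,v)" by (cases x)
  show ?thesis
  proof (cases "v = 0")
    case True
    then have u: "u \<noteq> 0" using assms x by auto
    have z: "z = None" using assms(4) True x by (simp add: projv_def)
    have c: "c = 0" using assms(2) z A by (auto simp: is_fixed_def mob_app_def split: if_splits)
    have a: "a \<noteq> 0" using assms(1) A c by (simp add: mdet_def)
    show ?thesis
      apply (rule exI[of _ a])
      using a u True c by (simp add: A x z mv_def sv_def multiplier_def deriv_frac0 mdet_def)
  next
    case False
    define q where "q = u / v"
    have z: "z = Some q" using assms(4) False x by (simp add: projv_def q_def)
    have fx: "c*q+d \<noteq> 0" "(a*q+b)/(c*q+d) = q"
      using assms(2) z A by (auto simp: is_fixed_def mob_app_def split: if_splits)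
    have fx2: "a*q+b = q*(c*q+d)" using fx by (simp add: field_simps)
    have uq: "u = q * v" using False by (simp add: q_def)
    have m1: "a * u + b * v = (c * q + d) * u"
    proof -
      have "a * u + b * v = v * (a * q + b)" by (simp add: uq algebra_simps)
      also have "\<dots> = v * (q * (c * q + d))" using fx2 by simp
      also have "\<dots> = (c * q + d) * u" by (simp add: uq algebra_simps)
      finally show ?thesis .
    qed
    have m2: "c * u + d * v = (c * q + d) * v" by (simp add: uq algebra_simps)
    have mvx: "mv A x = sv (c*q+d) x" by (simp add: A x mv_def sv_def m1 m2)
    have mult: "multiplier A z = (a*d - b*c)/(c*q+d)^2"
      unfolding A z multiplier_def by (simp only: prod.case option.case) (rule deriv_frac[OF fx(1)])
    show ?thesis
      apply (rule exI[of _ "c*q+d"])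
      using fx mvx mult by (simp add: A mdet_def)
  qed
qed

lemma contract_alg:
  fixes L11 L12 L21 L22 a1 a2 r1 r2 g1 g2 la lr :: complex
  assumes e: "L11*a1 + L12*a2 = la*a1" "L21*a1+L22*a2 = la*a2" "L11*r1+L12*r2 = lr*r1" "L21*r1+L22*r2 = lr*r2"
    and la: "la \<noteq> 0" and D: "a1*r2 - r1*a2 \<noteq> 0"
  shows "1/la * (L11*g1 + L12*g2) = (g1*r2 - r1*g2)/(a1*r2-r1*a2) * a1 + (a1*g2 - g1*a2)/(a1*r2-r1*a2) * (lr/la) * r1"
    and "1/la * (L21*g1 + L22*g2) = (g1*r2 - r1*g2)/(a1*r2-r1*a2) * a2 + (a1*g2 - g1*a2)/(a1*r2-r1*a2) * (lr/la) * r2"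
proof -
  define D where "D = a1*r2 - r1*a2"
  have h1: "D*(L11*g1+L12*g2) = (g1*r2 - r1*g2)*(L11*a1 + L12*a2) + (a1*g2 - g1*a2)*(L11*r1 + L12*r2)"
    unfolding D_def by algebra
  have h2: "D*(L21*g1+L22*g2) = (g1*r2 - r1*g2)*(L21*a1 + L22*a2) + (a1*g2 - g1*a2)*(L21*r1 + L22*r2)"
    unfolding D_def by algebra
  have Dn: "D \<noteq> 0" using D unfolding D_def .
  have k1: "L11*g1+L12*g2 = ((g1*r2 - r1*g2)*(la*a1) + (a1*g2 - g1*a2)*(lr*r1)) / D"
    using h1 Dn unfolding e by (simp add: field_simps)
  have k2: "L21*g1+L22*g2 = ((g1*r2 - r1*g2)*(la*a2) + (a1*g2 - g1*a2)*(lr*r2)) / D"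
    using h2 Dn unfolding e by (simp add: field_simps)
  show "1/la * (L11*g1 + L12*g2) = (g1*r2 - r1*g2)/(a1*r2-r1*a2) * a1 + (a1*g2 - g1*a2)/(a1*r2-r1*a2) * (lr/la) * r1"
    unfolding k1 D_def[symmetric] using la Dn by (simp add: field_simps)
  show "1/la * (L21*g1 + L22*g2) = (g1*r2 - r1*g2)/(a1*r2-r1*a2) * a2 + (a1*g2 - g1*a2)/(a1*r2-r1*a2) * (lr/la) * r2"
    unfolding k2 D_def[symmetric] using la Dn by (simp add: field_simps)
qed

lemma contract:
  assumes ev: "eventually (\<lambda>e. mv (L e) (a e) = sv (la e) (a e) \<and> mv (L e) (r e) = sv (lr e) (r e) \<and> la e \<noteq> 0) F"
    and a: "(a \<longlongrightarrow> a0) F" and r: "(r \<longlongrightarrow> r0) F" and D: "det2 a0 r0 \<noteq> 0"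
    and mu: "((\<lambda>e. lr e / la e) \<longlongrightarrow> 0) F"
    and G: "vconv G q F" and q: "q \<noteq> projv r0"
  shows "vconv (\<lambda>e. mv (L e) (G e)) (projv a0) F"
proof -
  obtain c y where y: "y \<noteq> (0,0)" "projv y = q" "eventually (\<lambda>e. c e \<noteq> 0) F"
    "((\<lambda>e. sv (c e) (G e)) \<longlongrightarrow> y) F" using G unfolding vconv_def by blast
  have a0: "a0 \<noteq> (0,0)" and r0: "r0 \<noteq> (0,0)" using D by (auto simp: det2_def)
  have Dy: "det2 y r0 \<noteq> 0" using projv_eq_iff[OF y(1) r0] y(2) q by simp
  define s0 where "s0 = det2 y r0 / det2 a0 r0"
  have s0: "s0 \<noteq> 0" using Dy D by (simp add: s0_def)
  define eta where "eta e = sv (c e) (G e)" for e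
  define Dt where "Dt e = det2 (a e) (r e)" for e
  define s where "s e = det2 (eta e) (r e) / Dt e" for e
  define t where "t e = det2 (a e) (eta e) / Dt e" for e
  define E where "E e = (s e * fst (a e) + t e * (lr e / la e) * fst (r e),
                         s e * snd (a e) + t e * (lr e / la e) * snd (r e))" for e
  have eta: "(eta \<longlongrightarrow> y) F" using y(4) unfolding eta_def .
  have Dt: "(Dt \<longlongrightarrow> det2 a0 r0) F" unfolding Dt_def det2_def by (intro tendsto_intros a r)
  have d1: "((\<lambda>e. det2 (eta e) (r e)) \<longlongrightarrow> det2 y r0) F" unfolding det2_def by (intro tendsto_intros eta r)
  have d2: "((\<lambda>e. det2 (a e) (eta e)) \<longlongrightarrow> det2 a0 y) F" unfolding det2_def by (intro tendsto_intros eta a)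
  have Et: "(E \<longlongrightarrow> sv s0 a0) F"
  proof -
    have "(E \<longlongrightarrow> (s0 * fst a0 + det2 a0 y / det2 a0 r0 * 0 * fst r0,
                  s0 * snd a0 + det2 a0 y / det2 a0 r0 * 0 * snd r0)) F"
      unfolding E_def s_def t_def s0_def
      by (intro tendsto_intros a r d1 d2 Dt mu D)
    then show ?thesis by (simp add: sv_def)
  qed
  have evD: "eventually (\<lambda>e. Dt e \<noteq> 0) F" using tendsto_imp_eventually_ne[OF Dt D] .
  have evE: "eventually (\<lambda>e. sv (c e / la e) (mv (L e) (G e)) = E e) F"
    using ev evD
  proof eventually_elim
    case (elim e)
    obtain L11 L12 L21 L22 where L: "L e = (L11, L12, L21, L22)" by (rule mat_cases4)
    obtain a1 a2 where ae: "a e = (a1, a2)" by (cases "a e")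
    obtain r1 r2 where re: "r e = (r1, r2)" by (cases "r e")
    obtain g1 g2 where ge: "eta e = (g1, g2)" by (cases "eta e")
    have m: "sv (c e / la e) (mv (L e) (G e)) = sv (1 / la e) (mv (L e) (eta e))"
      by (simp add: eta_def mv_sv sv_sv)
    have eqs: "L11*a1 + L12*a2 = la e*a1" "L21*a1+L22*a2 = la e*a2" "L11*r1+L12*r2 = lr e*r1" "L21*r1+L22*r2 = lr e*r2"
      using elim(1) L ae re by (simp_all add: mv_def sv_def)
    have Dn: "a1*r2 - r1*a2 \<noteq> 0" using elim(2) ae re by (simp add: Dt_def det2_def)
    note ca = contract_alg[OF eqs _ Dn, of g1 g2]
    show ?case unfolding m using ca elim(1)
      by (simp add: L ae re ge E_def s_def t_def Dt_def det2_def mv_def sv_def)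
  qed
  have t1: "((\<lambda>e. sv (c e / la e) (mv (L e) (G e))) \<longlongrightarrow> sv s0 a0) F"
    using tendsto_cong[OF evE] Et by simp
  have evc: "eventually (\<lambda>e. c e / la e \<noteq> 0) F" using ev y(3) by eventually_elim simp
  show ?thesis unfolding vconv_def
    apply (rule exI[of _ "\<lambda>e. c e / la e"], rule exI[of _ "sv s0 a0"])
    using t1 evc s0 a0 by (simp add: sv_eq0 projv_sv)
qed

lemma det2_sv: "det2 (sv c x) (sv d y) = c * d * det2 x y"
  by (simp add: det2_def sv_def algebra_simps)
lemma det2_swap: "det2 y x = - det2 x y" by (simp add: det2_def)
lemma sv_cancel: "c \<noteq> 0 \<Longrightarrow> sv c x = sv c y \<Longrightarrow> x = y"
  by (cases x; cases y) (simp add: sv_def)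

lemma letter_contr:
  assumes evN: "eventually (\<lambda>e. mdet (N e) \<noteq> 0 \<and> mv (N e) (a e) = sv (la e) (a e) \<and>
        mv (N e) (r e) = sv (lr e) (r e) \<and> la e \<noteq> 0 \<and> mul e = mdet (N e) / (la e)^2) F"
    and a: "(a \<longlongrightarrow> a0) F" and r: "(r \<longlongrightarrow> r0) F" and D: "det2 a0 r0 \<noteq> 0"
    and mu: "(mul \<longlongrightarrow> 0) F"
  shows "vconv G q F \<Longrightarrow> q \<noteq> projv r0 \<Longrightarrow> vconv (\<lambda>e. mv (N e) (G e)) (projv a0) F"
    and "vconv G q F \<Longrightarrow> q \<noteq> projv a0 \<Longrightarrow> vconv (\<lambda>e. mv (minv (N e)) (G e)) (projv r0) F"
proof -
  have Dt: "((\<lambda>e. det2 (a e) (r e)) \<longlongrightarrow> det2 a0 r0) F" unfolding det2_def by (intro tendsto_intros a r)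
  have evD: "eventually (\<lambda>e. det2 (a e) (r e) \<noteq> 0) F" using tendsto_imp_eventually_ne[OF Dt D] .
  have evP: "eventually (\<lambda>e. la e * lr e = mdet (N e)) F" using evN evD
  proof eventually_elim
    case (elim e)
    have "det2 (mv (N e) (a e)) (mv (N e) (r e)) = mdet (N e) * det2 (a e) (r e)" by (rule det2_mv)
    then have "la e * lr e * det2 (a e) (r e) = mdet (N e) * det2 (a e) (r e)" using elim(1) by (simp add: det2_sv)
    then show ?case using elim(2) by simp
  qed
  have evR: "eventually (\<lambda>e. lr e / la e = mul e) F" using evN evP
  proof eventually_elim
    case (elim e)
    have m: "mul e = (la e * lr e) / (la e * la e)" using elim by (simp add: power2_eq_square)
    have l0: "la e \<noteq> 0" using elim by simp
    show ?case unfolding m using l0 by (simp add: field_simps)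
  qed
  have mu2: "((\<lambda>e. lr e / la e) \<longlongrightarrow> 0) F" using tendsto_cong[OF evR] mu by simp
  show "vconv G q F \<Longrightarrow> q \<noteq> projv r0 \<Longrightarrow> vconv (\<lambda>e. mv (N e) (G e)) (projv a0) F"
  proof -
    have ev1: "eventually (\<lambda>e. mv (N e) (a e) = sv (la e) (a e) \<and> mv (N e) (r e) = sv (lr e) (r e) \<and> la e \<noteq> 0) F"
      using evN by eventually_elim simp
    show "vconv G q F \<Longrightarrow> q \<noteq> projv r0 \<Longrightarrow> vconv (\<lambda>e. mv (N e) (G e)) (projv a0) F"
      by (rule contract[OF ev1 a r D mu2])
  qed
  have evI: "eventually (\<lambda>e. mv (minv (N e)) (r e) = sv (la e) (r e) \<and>
      mv (minv (N e)) (a e) = sv (lr e) (a e) \<and> la e \<noteq> 0) F" using evN evP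
  proof eventually_elim
    case (elim e)
    have lr: "lr e \<noteq> 0" using elim by auto
    have "sv (mdet (N e)) (r e) = mv (minv (N e)) (mv (N e) (r e))" by (simp add: mv_minv1)
    also have "\<dots> = sv (lr e) (mv (minv (N e)) (r e))" using elim by (simp add: mv_sv)
    finally have 1: "sv (lr e) (mv (minv (N e)) (r e)) = sv (lr e) (sv (la e) (r e))"
      using elim(2) by (simp add: sv_sv mult.commute)
    have "sv (mdet (N e)) (a e) = mv (minv (N e)) (mv (N e) (a e))" by (simp add: mv_minv1)
    also have "\<dots> = sv (la e) (mv (minv (N e)) (a e))" using elim by (simp add: mv_sv)
    finally have 2: "sv (la e) (mv (minv (N e)) (a e)) = sv (la e) (sv (lr e) (a e))"
      using elim(2) by (simp add: sv_sv)
    show ?case using sv_cancel[OF lr 1] sv_cancel[OF _ 2] elim by simp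
  qed
  have D2: "det2 r0 a0 \<noteq> 0"
  proof -
    have "det2 r0 a0 = - det2 a0 r0" by (rule det2_swap)
    then show ?thesis using D by simp
  qed
  show "vconv G q F \<Longrightarrow> q \<noteq> projv a0 \<Longrightarrow> vconv (\<lambda>e. mv (minv (N e)) (G e)) (projv r0) F"
    by (rule contract[OF evI r a D2 mu2])
qed

lemma mdet_funpow: "mdet (((mmul A) ^^ n) mid) = mdet A ^ n"
  by (induction n) (simp_all add: mdet_mmul)

lemma mdet_mpow: "mdet M \<noteq> 0 \<Longrightarrow> mdet (mpow M k) \<noteq> 0"
  by (simp add: mpow_def mdet_funpow)

lemma mob_step:
  assumes d: "mdet (mpow M k) \<noteq> 0" and c: "c \<noteq> 0"
    and h: "\<And>y. mv (mpow M k') y = sv c (mv A (mv (mpow M k) y))"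
  shows "mob_app (mpow M k') z = mob_app A (mob_app (mpow M k) z)"
proof -
  have nz: "mv (mpow M k) (nrep z) \<noteq> (0,0)" using mv_nz[OF d nrep_nz] .
  have "mob_app (mpow M k') z = projv (mv (mpow M k') (nrep z))"
    using mob_app_projv[OF nrep_nz, of _ z] by simp
  also have "\<dots> = projv (mv A (mv (mpow M k) (nrep z)))" by (simp add: h projv_sv c)
  also have "\<dots> = mob_app A (projv (mv (mpow M k) (nrep z)))" using mob_app_projv[OF nz] by simp
  also have "\<dots> = mob_app A (mob_app (mpow M k) z)" using mob_app_projv[OF nrep_nz, of _ z] by simp
  finally show ?thesis .
qed

lemma mpow_succ: assumes "mdet M \<noteq> 0"
  shows "mob_app (mpow M (k+1)) z = mob_app M (mob_app (mpow M k) z)"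
proof (cases "0 \<le> k")
  case True
  have "nat (k+1) = Suc (nat k)" using True by simp
  then have e0: "mpow M (k+1) = mmul M (mpow M k)" using True by (simp add: mpow_def)
  show ?thesis
    apply (rule mob_step[where c=1])
      apply (rule mdet_mpow[OF assms])
     apply simp
    apply (simp add: e0 mv_mmul sv_def)
    done
next
  case False
  define n where "n = nat (-(k+1))"
  have n1: "nat (-k) = Suc n" using False by (simp add: n_def)
  have e1: "mpow M k = mmul (minv M) (mpow M (k+1))"
  proof (cases "k = -1")
    case True then show ?thesis using n1 by (simp add: mpow_def n_def)
  next
    case False
    then have "\<not> 0 \<le> k + 1" using \<open>\<not> 0 \<le> k\<close> by simp
    then show ?thesis using n1 \<open>\<not> 0 \<le> k\<close> by (simp add: mpow_def n_def)
  qed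
  show ?thesis
  proof (rule mob_step[where c="1 / mdet M"])
    show "mdet (mpow M k) \<noteq> 0" by (rule mdet_mpow[OF assms])
    show "1 / mdet M \<noteq> 0" using assms by simp
    fix y
    show "mv (mpow M (k + 1)) y = sv (1 / mdet M) (mv M (mv (mpow M k) y))"
      unfolding e1 mv_mmul mv_minv2 sv_sv using assms by simp
  qed
qed

lemma mpow_pred: assumes "mdet M \<noteq> 0"
  shows "mob_app (mpow M (k-1)) z = mob_app (minv M) (mob_app (mpow M k) z)"
proof (cases "k \<le> 0")
  case True
  have "nat (-(k-1)) = Suc (nat (-k))" using True by simp
  moreover have "mpow M k = ((mmul (minv M)) ^^ nat (-k)) mid"
    using True by (cases "k = 0") (simp_all add: mpow_def)
  ultimately have e0: "mpow M (k-1) = mmul (minv M) (mpow M k)" using True by (simp add: mpow_def)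
  show ?thesis
    apply (rule mob_step[where c=1])
      apply (rule mdet_mpow[OF assms])
     apply simp
    apply (simp add: e0 mv_mmul sv_def)
    done
next
  case False
  have n1: "nat k = Suc (nat (k-1))" using False by simp
  have e1: "mpow M k = mmul M (mpow M (k-1))" using False n1 by (simp add: mpow_def)
  show ?thesis
  proof (rule mob_step[where c="1 / mdet M"])
    show "mdet (mpow M k) \<noteq> 0" by (rule mdet_mpow[OF assms])
    show "1 / mdet M \<noteq> 0" using assms by simp
    fix y
    show "mv (mpow M (k - 1)) y = sv (1 / mdet M) (mv (minv M) (mv (mpow M k) y))"
      unfolding e1 mv_mmul mv_minv1 sv_sv using assms by simp
  qed
qed

lemma mpow0[simp]: "mob_app (mpow M 0) z = z"
  by (cases z) (auto simp: mpow_def mid_def mob_app_def)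

definition Lt :: "(nat \<times> int) set" where "Lt = {(0,1),(0,-1),(1,1),(1,-1)}"
definition attp :: "(nat \<Rightarrow> nat \<Rightarrow> ecomplex) \<Rightarrow> nat \<times> int \<Rightarrow> ecomplex" where
  "attp p l = (case l of (j, s) \<Rightarrow>
              (if j = 0 then (if s = 1 then p 0 1 else p 0 2)
                        else (if s = 1 then p 1 2 else p 1 1)))"
definition repp :: "(nat \<Rightarrow> nat \<Rightarrow> ecomplex) \<Rightarrow> nat \<times> int \<Rightarrow> ecomplex" where
  "repp p l = (case l of (j, s) \<Rightarrow>
              (if j = 0 then (if s = 1 then p 0 2 else p 0 1)
                        else (if s = 1 then p 1 1 else p 1 2)))"
definition canc :: "nat \<times> int \<Rightarrow> nat \<times> int \<Rightarrow> bool" where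
  "canc a b \<longleftrightarrow> fst a = fst b \<and> snd a = - snd b"
definition nc :: "(nat \<times> int) list \<Rightarrow> bool" where
  "nc r \<longleftrightarrow> (\<forall>i. Suc i < length r \<longrightarrow> \<not> canc (r ! i) (r ! Suc i))"
definition isblk :: "nat \<times> int \<Rightarrow> nat \<times> int \<Rightarrow> bool" where
  "isblk a b \<longleftrightarrow> (a = (0,1) \<and> b = (1,1)) \<or> (a = (1,-1) \<and> b = (0,-1))"

fun st :: "(real \<Rightarrow> mat) \<Rightarrow> (real \<Rightarrow> mat) \<Rightarrow> vec \<Rightarrow> (nat \<times> int) list \<Rightarrow> real \<Rightarrow> vec" where
  "st A0 A1 xi [] e = xi"
| "st A0 A1 xi (l # r) e = mv (letter (A0 e) (A1 e) l) (st A0 A1 xi r e)"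

fun blk :: "(nat \<times> int) list \<Rightarrow> int \<times> (nat \<times> int) list" where
  "blk (a # b # r) = (if a = (0,1) \<and> b = (1,1) then (case blk r of (k, r') \<Rightarrow> (k + 1, r'))
       else if a = (1,-1) \<and> b = (0,-1) then (case blk r of (k, r') \<Rightarrow> (k - 1, r'))
       else (0, a # b # r))"
| "blk r = (0, r)"

lemma nc_Cons: "nc (a # r) \<Longrightarrow> nc r"
  unfolding nc_def by (metis Suc_less_eq length_Cons nth_Cons_Suc)
lemma nc_Cons2: "nc (a # b # r) \<Longrightarrow> \<not> canc a b"
  unfolding nc_def by (metis length_Cons nth_Cons_0 nth_Cons_Suc zero_less_Suc Suc_less_eq)
lemma nc_append: "nc (u @ r) \<Longrightarrow> nc r"
  by (induction u) (auto dest: nc_Cons)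

lemma blk_props: "nc r \<Longrightarrow> blk r = (k, r') \<Longrightarrow>
   (\<exists>u. r = u @ r') \<and> 2 * \<bar>k\<bar> \<le> int (length r) \<and>
   (r' = [] \<or> (\<exists>l rest. r' = l # rest \<and> (rest = [] \<or> \<not> isblk l (hd rest)))) \<and>
   (k = 0 \<longrightarrow> r' = r) \<and>
   (k > 0 \<longrightarrow> hd r = (0,1) \<and> (\<forall>l rest. r' = l # rest \<longrightarrow> l \<noteq> (1,-1))) \<and>
   (k < 0 \<longrightarrow> hd r = (1,-1) \<and> (\<forall>l rest. r' = l # rest \<longrightarrow> l \<noteq> (0,1)))"
proof (induction r arbitrary: k r' rule: blk.induct)
  case (1 a b r)
  have ncr: "nc r" using nc_Cons[OF nc_Cons[OF "1.prems"(1)]] .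
  have cab: "\<not> canc a b" using nc_Cons2[OF "1.prems"(1)] .
  have cbr: "\<not> canc b (hd r)" if rne: "r \<noteq> []"
  proof -
    obtain c t where r: "r = c # t" using rne by (cases r) auto
    show ?thesis using nc_Cons2[of b c t] nc_Cons[OF "1.prems"(1)] r by simp
  qed
  obtain k0 r0 where b0: "blk r = (k0, r0)" by (cases "blk r")
  show ?case
  proof (cases "a = (0,1) \<and> b = (1,1)")
    case True
    note IH = "1.IH"(1)[OF True ncr b0]
    have k: "k = k0 + 1" and r': "r' = r0" using "1.prems"(2) True b0 by auto
    have k0: "k0 \<ge> 0"
    proof (rule ccontr)
      assume "\<not> k0 \<ge> 0"
      then have "hd r = (1,-1)" "r \<noteq> []" using IH by auto
      then show False using cbr True by (simp add: canc_def)
    qed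
    have l1: "l \<noteq> (1,-1)" if "r' = l # rest" for l rest
    proof (cases "k0 = 0")
      case True
      then have "r = l # rest" using IH r' that by simp
      then show ?thesis using cbr \<open>a = (0,1) \<and> b = (1,1)\<close> by (auto simp: canc_def)
    next
      case False
      then show ?thesis using IH k0 r' that by auto
    qed
    show ?thesis using IH k r' k0 True l1 by force
  next
    case F1: False
    show ?thesis
    proof (cases "a = (1,-1) \<and> b = (0,-1)")
      case True
      note IH = "1.IH"(2)[OF F1 True ncr b0]
      have k: "k = k0 - 1" and r': "r' = r0" using "1.prems"(2) True F1 b0 by auto
      have k0: "k0 \<le> 0"
      proof (rule ccontr)
        assume "\<not> k0 \<le> 0"
        then have "hd r = (0,1)" "r \<noteq> []" using IH by auto
        then show False using cbr True by (simp add: canc_def)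
      qed
      have l1: "l \<noteq> (0,1)" if "r' = l # rest" for l rest
      proof (cases "k0 = 0")
        case True
        then have "r = l # rest" using IH r' that by simp
        then show ?thesis using cbr \<open>a = (1,-1) \<and> b = (0,-1)\<close> by (auto simp: canc_def)
      next
        case False
        then show ?thesis using IH k0 r' that by auto
      qed
      show ?thesis using IH k r' k0 True l1 by force
    next
      case False
      then have "k = 0" "r' = a # b # r" using F1 "1.prems"(2) by auto
      then show ?thesis using F1 False by (auto simp: isblk_def)
    qed
  qed
next
  case "2_1"
  then show ?case by auto
next
  case ("2_2" v)
  then show ?case by auto
qed

lemma Lt_cases: "l \<in> Lt \<Longrightarrow> l = (0,1) \<or> l = (0,-1) \<or> l = (1,1) \<or> l = (1,-1)"
  by (auto simp: Lt_def)

locale wsys =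
  fixes p :: "nat \<Rightarrow> nat \<Rightarrow> ecomplex" and M :: mat and x :: ecomplex and Nx :: nat
    and A0 A1 :: "real \<Rightarrow> mat" and xi :: vec and F :: "real filter"
  assumes p_eq: "p 0 2 = p 1 2"
    and p_dist: "p 0 2 \<noteq> p 0 1" "p 0 2 \<noteq> p 1 1" "p 0 1 \<noteq> p 1 1"
    and M_orbit: "\<And>k i j l s. k \<noteq> 0 \<Longrightarrow> i \<in> {0, 1} \<Longrightarrow> j \<in> {1, 2} \<Longrightarrow>
                    l \<in> {0, 1} \<Longrightarrow> s \<in> {1, 2} \<Longrightarrow> (l, s) \<noteq> (i, j) \<Longrightarrow>
                    mob_app (mpow M k) (p i j) \<noteq> p l s"
    and x_cond: "\<And>s i j. - int Nx \<le> s \<Longrightarrow> s \<le> int Nx \<Longrightarrow>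
                   i \<in> {0, 1} \<Longrightarrow> j \<in> {1, 2} \<Longrightarrow> mob_app (mpow M s) x \<noteq> p i j"
    and M_det: "mdet M \<noteq> 0"
    and xi: "xi \<noteq> (0,0)" "projv xi = x"
    and contr: "\<And>l G q. l \<in> Lt \<Longrightarrow> vconv G q F \<Longrightarrow> q \<noteq> repp p l \<Longrightarrow>
          vconv (\<lambda>e. mv (letter (A0 e) (A1 e) l) (G e)) (attp p l) F"
    and blockP: "\<And>G q. vconv G q F \<Longrightarrow> vconv (\<lambda>e. mv (mmul (A0 e) (A1 e)) (G e)) (mob_app M q) F"
    and blockN: "\<And>G q. vconv G q F \<Longrightarrow> vconv (\<lambda>e. mv (minv (mmul (A0 e) (A1 e))) (G e)) (mob_app (minv M) q) F"
begin

definition limp :: "(nat \<times> int) list \<Rightarrow> ecomplex" where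
  "limp r = (case blk r of (k, r') \<Rightarrow> mob_app (mpow M k) (case r' of [] \<Rightarrow> x | l # _ \<Rightarrow> attp p l))"

lemma blocks: "blk r = (k, r') \<Longrightarrow> vconv (st A0 A1 xi r') q F \<Longrightarrow>
    vconv (st A0 A1 xi r) (mob_app (mpow M k) q) F"
proof (induction r arbitrary: k r' rule: blk.induct)
  case (1 a b r)
  obtain k0 r0 where b0: "blk r = (k0, r0)" by (cases "blk r")
  show ?case
  proof (cases "a = (0,1) \<and> b = (1,1)")
    case True
    have k: "k = k0 + 1" and r': "r' = r0" using "1.prems"(1) True b0 by auto
    have IH: "vconv (st A0 A1 xi r) (mob_app (mpow M k0) q) F"
      using "1.IH"(1)[OF True b0] "1.prems"(2) r' by simp
    have e: "st A0 A1 xi (a # b # r) = (\<lambda>e. mv (mmul (A0 e) (A1 e)) (st A0 A1 xi r e))"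
      using True by (auto simp: letter_def mv_mmul)
    show ?thesis unfolding e k mpow_succ[OF M_det] by (rule blockP[OF IH])
  next
    case F1: False
    show ?thesis
    proof (cases "a = (1,-1) \<and> b = (0,-1)")
      case True
      have k: "k = k0 - 1" and r': "r' = r0" using "1.prems"(1) True F1 b0 by auto
      have IH: "vconv (st A0 A1 xi r) (mob_app (mpow M k0) q) F"
        using "1.IH"(2)[OF F1 True b0] "1.prems"(2) r' by simp
      have e: "st A0 A1 xi (a # b # r) = (\<lambda>e. mv (minv (mmul (A0 e) (A1 e))) (st A0 A1 xi r e))"
        using True by (auto simp: letter_def mv_mmul minv_mmul)
      show ?thesis unfolding e k mpow_pred[OF M_det] by (rule blockN[OF IH])
    next
      case False
      then have "k = 0" "r' = a # b # r" using F1 "1.prems"(1) by auto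
      then show ?thesis using "1.prems"(2) by simp
    qed
  qed
next
  case "2_1"
  then show ?case by auto
next
  case ("2_2" v)
  then show ?case by auto
qed

lemma p_dist': "p 0 1 \<noteq> p 0 2" "p 1 1 \<noteq> p 0 2" "p 1 1 \<noteq> p 0 1"
  using p_dist by (auto dest: sym)

lemma adj_ok: "l \<in> Lt \<Longrightarrow> l2 \<in> Lt \<Longrightarrow> \<not> canc l l2 \<Longrightarrow> \<not> isblk l l2 \<Longrightarrow> attp p l2 \<noteq> repp p l"
  using p_dist p_dist' p_eq
  by (auto simp: Lt_def canc_def isblk_def attp_def repp_def)

lemma orbit_ok:
  assumes k: "k \<noteq> 0" and l: "l \<in> Lt" and l2: "l2 \<in> Lt"
    and ex1: "\<not> (l2 = (0,1) \<and> l = (0,-1))" and ex2: "\<not> (l2 = (1,-1) \<and> l = (1,1))"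
  shows "mob_app (mpow M k) (attp p l2) \<noteq> repp p l"
proof -
  have O: "mob_app (mpow M k) (p 0 1) \<noteq> p 0 2"
      "mob_app (mpow M k) (p 0 1) \<noteq> p 1 1"
      "mob_app (mpow M k) (p 0 1) \<noteq> p 1 2"
      "mob_app (mpow M k) (p 0 2) \<noteq> p 0 1"
      "mob_app (mpow M k) (p 0 2) \<noteq> p 1 1"
      "mob_app (mpow M k) (p 0 2) \<noteq> p 1 2"
      "mob_app (mpow M k) (p 1 1) \<noteq> p 0 1"
      "mob_app (mpow M k) (p 1 1) \<noteq> p 0 2"
      "mob_app (mpow M k) (p 1 1) \<noteq> p 1 2"
      "mob_app (mpow M k) (p 1 2) \<noteq> p 0 1"
      "mob_app (mpow M k) (p 1 2) \<noteq> p 0 2"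
      "mob_app (mpow M k) (p 1 2) \<noteq> p 1 1"
    using M_orbit[OF k] by auto
  show ?thesis using l l2 ex1 ex2 O p_eq
    by (auto simp: Lt_def attp_def repp_def)
qed

lemma side:
  assumes nc: "nc (l # rest)" and Lt: "set (l # rest) \<subseteq> Lt" and nb: "rest = [] \<or> \<not> isblk l (hd rest)"
    and len: "length rest \<le> Nx"
  shows "limp rest \<noteq> repp p l"
proof -
  obtain k2 r2 where b2: "blk rest = (k2, r2)" by (cases "blk rest")
  have ncr: "nc rest" using nc_Cons[OF nc] .
  note BP = blk_props[OF ncr b2]
  have lL: "l \<in> Lt" using Lt by auto
  have rp: "repp p l \<in> {p 0 1, p 0 2, p 1 1, p 1 2}"
    using lL by (auto simp: Lt_def repp_def)
  show ?thesis
  proof (cases r2)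
    case Nil
    have "limp rest = mob_app (mpow M k2) x" by (simp add: limp_def b2 Nil)
    moreover have b1: "- int Nx \<le> k2" and b2: "k2 \<le> int Nx" using BP len by linarith+
    moreover have "mob_app (mpow M k2) x \<notin> {p 0 1, p 0 2, p 1 1, p 1 2}"
      using x_cond[OF b1 b2, of 0 1] x_cond[OF b1 b2, of 0 2] x_cond[OF b1 b2, of 1 1] x_cond[OF b1 b2, of 1 2]
      by auto
    ultimately show ?thesis using rp by auto
  next
    case (Cons l2 rest2)
    have lim: "limp rest = mob_app (mpow M k2) (attp p l2)" by (simp add: limp_def b2 Cons)
    have l2L: "l2 \<in> Lt" using BP Cons Lt by auto
    show ?thesis
    proof (cases "k2 = 0")
      case True
      then have "rest = l2 # rest2" using BP Cons by simp
      then have "\<not> canc l l2" "\<not> isblk l l2" using nc_Cons2[of l l2 rest2] nc nb by auto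
      then show ?thesis using lim True adj_ok[OF lL l2L] by simp
    next
      case False
      have ne: "rest \<noteq> []" using BP False by auto
      have ch: "\<not> canc l (hd rest)" using nc ne nc_Cons2[of l "hd rest" "tl rest"] by simp
      have ex1: "\<not> (l2 = (0,1) \<and> l = (0,-1))"
      proof
        assume a: "l2 = (0,1) \<and> l = (0,-1)"
        show False
        proof (cases "k2 > 0")
          case True then show False using BP a ch by (auto simp: canc_def)
        next
          case False then show False using BP a Cons \<open>k2 \<noteq> 0\<close> by auto
        qed
      qed
      have ex2: "\<not> (l2 = (1,-1) \<and> l = (1,1))"
      proof
        assume a: "l2 = (1,-1) \<and> l = (1,1)"
        show False
        proof (cases "k2 > 0")
          case True then show False using BP a Cons by auto
        next
          case False then show False using BP a ch \<open>k2 \<noteq> 0\<close> by (auto simp: canc_def)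
        qed
      qed
      show ?thesis using lim orbit_ok[OF False lL l2L ex1 ex2] by simp
    qed
  qed
qed

lemma main: "nc r \<Longrightarrow> set r \<subseteq> Lt \<Longrightarrow> length r \<le> Nx \<Longrightarrow> vconv (st A0 A1 xi r) (limp r) F"
proof (induction "length r" arbitrary: r rule: less_induct)
  case less
  obtain k r' where b: "blk r = (k, r')" by (cases "blk r")
  note BP = blk_props[OF less.prems(1) b]
  obtain u where u: "r = u @ r'" using BP by blast
  have base: "vconv (st A0 A1 xi r') (case r' of [] \<Rightarrow> x | l # _ \<Rightarrow> attp p l) F"
  proof (cases r')
    case Nil
    have "st A0 A1 xi r' = (\<lambda>e. xi)" using Nil by (simp add: fun_eq_iff)
    then show ?thesis using vconv_const[OF xi(1)] xi(2) Nil by simp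
  next
    case (Cons l rest)
    have nc': "nc (l # rest)" using nc_append less.prems(1) u Cons by metis
    have Lt': "set (l # rest) \<subseteq> Lt" using less.prems(2) u Cons by auto
    have nb: "rest = [] \<or> \<not> isblk l (hd rest)" using BP Cons by auto
    have len: "length rest < length r" using u Cons by simp
    have IH: "vconv (st A0 A1 xi rest) (limp rest) F"
      using less.hyps[OF len nc_Cons[OF nc'] ] Lt' less.prems(3) len by auto
    have sd: "limp rest \<noteq> repp p l" using side[OF nc' Lt' nb] len less.prems(3) by simp
    have lL: "l \<in> Lt" using Lt' by simp
    have "vconv (\<lambda>e. mv (letter (A0 e) (A1 e) l) (st A0 A1 xi rest e)) (attp p l) F"
      by (rule contr[OF lL IH sd])
    moreover have "st A0 A1 xi (l # rest) = (\<lambda>e. mv (letter (A0 e) (A1 e) l) (st A0 A1 xi rest e))"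
      by (simp add: fun_eq_iff)
    ultimately show ?thesis using Cons by simp
  qed
  show ?case using blocks[OF b base] by (simp add: limp_def b)
qed

lemma final:
  assumes "nc (l # rest)" "set (l # rest) \<subseteq> Lt" "rest = [] \<or> \<not> isblk l (hd rest)" "length rest \<le> Nx"
  shows "vconv (st A0 A1 xi (l # rest)) (attp p l) F"
proof -
  have IH: "vconv (st A0 A1 xi rest) (limp rest) F"
    using main[OF nc_Cons[OF assms(1)]] assms(2,4) by auto
  have "vconv (\<lambda>e. mv (letter (A0 e) (A1 e) l) (st A0 A1 xi rest e)) (attp p l) F"
    by (rule contr[OF _ IH side[OF assms]]) (use assms(2) in auto)
  moreover have "st A0 A1 xi (l # rest) = (\<lambda>e. mv (letter (A0 e) (A1 e) l) (st A0 A1 xi rest e))"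
    by (simp add: fun_eq_iff)
  ultimately show ?thesis by simp
qed

end

lemma mob_data:
  fixes N :: "'b \<Rightarrow> mat" and pa pr :: "'b \<Rightarrow> ecomplex"
  assumes ev: "eventually (\<lambda>e. mdet (N e) \<noteq> 0 \<and> attracting_fp (N e) (pa e) \<and> repelling_fp (N e) (pr e)) F"
    and ca: "sconv pa qa F" and cr: "sconv pr qr F" and d: "qa \<noteq> qr"
    and mu: "((\<lambda>e. multiplier (N e) (pa e)) \<longlongrightarrow> 0) F"
  shows "vconv G q F \<Longrightarrow> q \<noteq> qr \<Longrightarrow> vconv (\<lambda>e. mv (N e) (G e)) qa F"
    and "vconv G q F \<Longrightarrow> q \<noteq> qa \<Longrightarrow> vconv (\<lambda>e. mv (minv (N e)) (G e)) qr F"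
proof -
  obtain A ya where A: "ya \<noteq> (0,0)" "projv ya = qa" "(A \<longlongrightarrow> ya) F"
    "eventually (\<lambda>e. A e \<noteq> (0,0) \<and> projv (A e) = pa e) F" using sconv_rep[OF ca] by blast
  obtain R yr where R: "yr \<noteq> (0,0)" "projv yr = qr" "(R \<longlongrightarrow> yr) F"
    "eventually (\<lambda>e. R e \<noteq> (0,0) \<and> projv (R e) = pr e) F" using sconv_rep[OF cr] by blast
  have D: "det2 ya yr \<noteq> 0" using projv_eq_iff[OF A(1) R(1)] A(2) R(2) d by simp
  have "\<forall>e. \<exists>l. (mdet (N e) \<noteq> 0 \<and> is_fixed (N e) (pa e) \<and> A e \<noteq> (0,0) \<and> projv (A e) = pa e) \<longrightarrow>
      (l \<noteq> 0 \<and> mv (N e) (A e) = sv l (A e) \<and> multiplier (N e) (pa e) = mdet (N e) / l^2)"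
    using fixed_eigen by blast
  then obtain la where la: "\<And>e. (mdet (N e) \<noteq> 0 \<and> is_fixed (N e) (pa e) \<and> A e \<noteq> (0,0) \<and> projv (A e) = pa e) \<Longrightarrow>
      (la e \<noteq> 0 \<and> mv (N e) (A e) = sv (la e) (A e) \<and> multiplier (N e) (pa e) = mdet (N e) / (la e)^2)"
    by metis
  have "\<forall>e. \<exists>l. (mdet (N e) \<noteq> 0 \<and> is_fixed (N e) (pr e) \<and> R e \<noteq> (0,0) \<and> projv (R e) = pr e) \<longrightarrow>
      (mv (N e) (R e) = sv l (R e))"
    using fixed_eigen by blast
  then obtain lr where lr: "\<And>e. (mdet (N e) \<noteq> 0 \<and> is_fixed (N e) (pr e) \<and> R e \<noteq> (0,0) \<and> projv (R e) = pr e) \<Longrightarrow>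
      mv (N e) (R e) = sv (lr e) (R e)"
    by metis
  have evN: "eventually (\<lambda>e. mdet (N e) \<noteq> 0 \<and> mv (N e) (A e) = sv (la e) (A e) \<and>
        mv (N e) (R e) = sv (lr e) (R e) \<and> la e \<noteq> 0 \<and> multiplier (N e) (pa e) = mdet (N e) / (la e)^2) F"
    using ev A(4) R(4)
  proof eventually_elim
    case (elim e)
    then have "is_fixed (N e) (pa e)" "is_fixed (N e) (pr e)"
      by (auto simp: attracting_fp_def repelling_fp_def)
    then show ?case using elim la[of e] lr[of e] by simp
  qed
  note LC = letter_contr[OF evN A(3) R(3) D mu]
  show "vconv G q F \<Longrightarrow> q \<noteq> qr \<Longrightarrow> vconv (\<lambda>e. mv (N e) (G e)) qa F"
    using LC(1) A(2) R(2) by simp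
  show "vconv G q F \<Longrightarrow> q \<noteq> qa \<Longrightarrow> vconv (\<lambda>e. mv (minv (N e)) (G e)) qr F"
    using LC(2) A(2) R(2) by simp
qed

lemma word_st: "mv (word_mat (A0 e) (A1 e) w) xi = st A0 A1 xi (rev w) e"
proof (induction w rule: rev_induct)
  case Nil
  then show ?case by (simp add: word_mat_def)
next
  case (snoc l w)
  have "word_mat (A0 e) (A1 e) (w @ [l]) = mmul (letter (A0 e) (A1 e) l) (word_mat (A0 e) (A1 e) w)"
    by (simp add: word_mat_def)
  then show ?case using snoc by (simp add: mv_mmul)
qed

lemma letter_simps:
  "letter A B (0,1) = A" "letter A B (0,-1) = minv A" "letter A B (1,1) = B" "letter A B (1,-1) = minv B"
  by (simp_all add: letter_def)

lemma attp_simps: "attp p (0,1) = p 0 1" "attp p (0,-1) = p 0 2" "attp p (1,1) = p 1 2" "attp p (1,-1) = p 1 1"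
  by (simp_all add: attp_def)
lemma repp_simps: "repp p (0,1) = p 0 2" "repp p (0,-1) = p 0 1" "repp p (1,1) = p 1 1" "repp p (1,-1) = p 1 2"
  by (simp_all add: repp_def)

lemma nc_rev: assumes "is_word w" shows "nc (rev w)"
  unfolding nc_def
proof (intro allI impI)
  fix i assume i: "Suc i < length (rev w)"
  define n where "n = length w"
  define j where "j = n - Suc (Suc i)"
  have jn: "Suc j < n" using i by (simp add: j_def n_def)
  have r1: "rev w ! i = w ! Suc j" using i by (simp add: rev_nth j_def n_def Suc_diff_Suc)
  have r2: "rev w ! Suc i = w ! j" using i by (simp add: rev_nth j_def n_def)
  have "\<not> (fst (w ! Suc j) = fst (w ! j) \<and> snd (w ! Suc j) = - snd (w ! j))"
    using assms jn unfolding is_word_def n_def by blast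
  then show "\<not> canc (rev w ! i) (rev w ! Suc i)" unfolding r1 r2 canc_def by simp
qed

theorem lemma4p11:
  fixes p :: "nat \<Rightarrow> nat \<Rightarrow> ecomplex"
    and pe :: "nat \<Rightarrow> nat \<Rightarrow> real \<Rightarrow> ecomplex"
    and M0 M1 :: "real \<Rightarrow> mat"
    and M :: mat
    and w :: "(nat \<times> int) list"
    and x :: ecomplex
  assumes p_eq: "p 0 2 = p 1 2"
    and p_dist: "p 0 2 \<noteq> p 0 1" "p 0 2 \<noteq> p 1 1" "p 0 1 \<noteq> p 1 1"
    and M0_mob: "\<And>e. e > 0 \<Longrightarrow> mdet (M0 e) \<noteq> 0"
    and M1_mob: "\<And>e. e > 0 \<Longrightarrow> mdet (M1 e) \<noteq> 0"
    and M0_hyp: "\<And>e. e > 0 \<Longrightarrow> hyperbolic (M0 e)"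
    and M1_hyp: "\<And>e. e > 0 \<Longrightarrow> hyperbolic (M1 e)"
    and fp01: "\<And>e. e > 0 \<Longrightarrow> attracting_fp (M0 e) (pe 0 1 e)"
    and fp02: "\<And>e. e > 0 \<Longrightarrow> repelling_fp (M0 e) (pe 0 2 e)"
    and fp12: "\<And>e. e > 0 \<Longrightarrow> attracting_fp (M1 e) (pe 1 2 e)"
    and fp11: "\<And>e. e > 0 \<Longrightarrow> repelling_fp (M1 e) (pe 1 1 e)"
    and pe_conv: "\<And>i j. i \<in> {0, 1} \<Longrightarrow> j \<in> {1, 2} \<Longrightarrow> sconv (pe i j) (p i j) (at_right 0)"
    and mu0: "((\<lambda>e. multiplier (M0 e) (pe 0 1 e)) \<longlongrightarrow> 0) (at_right 0)"
    and mu1: "((\<lambda>e. multiplier (M1 e) (pe 1 2 e)) \<longlongrightarrow> 0) (at_right 0)"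
    and M_mob: "mdet M \<noteq> 0"
    and M_lim: "\<exists>lam :: real \<Rightarrow> complex. (\<forall>e > 0. lam e \<noteq> 0) \<and>
                  ((\<lambda>e. msmul (lam e) (mmul (M0 e) (M1 e))) \<longlongrightarrow> M) (at_right 0)"
    and M_orbit: "\<And>k i j l s. k \<noteq> 0 \<Longrightarrow> i \<in> {0, 1} \<Longrightarrow> j \<in> {1, 2} \<Longrightarrow>
                    l \<in> {0, 1} \<Longrightarrow> s \<in> {1, 2} \<Longrightarrow> (l, s) \<noteq> (i, j) \<Longrightarrow>
                    mob_app (mpow M k) (p i j) \<noteq> p l s"
    and w_red: "reduced_word w"
    and w_last: "length w \<ge> 2 \<Longrightarrow>
                   \<not> (w ! (length w - 1) = (0, 1) \<and> w ! (length w - 2) = (1, 1)) \<and>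
                   \<not> (w ! (length w - 1) = (1, -1) \<and> w ! (length w - 2) = (0, -1))"
    and x_cond: "\<And>s i j. - int (length w) \<le> s \<Longrightarrow> s \<le> int (length w) \<Longrightarrow>
                   i \<in> {0, 1} \<Longrightarrow> j \<in> {1, 2} \<Longrightarrow> mob_app (mpow M s) x \<noteq> p i j"
  shows "sconv (\<lambda>e. mob_app (word_mat (M0 e) (M1 e) w) x)
           (case last w of (j, s) \<Rightarrow>
              (if j = 0 then (if s = 1 then p 0 1 else p 0 2)
                        else (if s = 1 then p 1 2 else p 1 1)))
           (at_right 0)"
proof -
  have epos: "eventually (\<lambda>e. e > 0) (at_right (0::real))" by (rule eventually_at_right_less)
  have ev0: "eventually (\<lambda>e. mdet (M0 e) \<noteq> 0 \<and> attracting_fp (M0 e) (pe 0 1 e) \<and> repelling_fp (M0 e) (pe 0 2 e)) (at_right 0)"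
    using epos
  proof eventually_elim
    case (elim e)
    show ?case using M0_mob[OF elim] fp01[OF elim] fp02[OF elim] by blast
  qed
  have ev1: "eventually (\<lambda>e. mdet (M1 e) \<noteq> 0 \<and> attracting_fp (M1 e) (pe 1 2 e) \<and> repelling_fp (M1 e) (pe 1 1 e)) (at_right 0)"
    using epos
  proof eventually_elim
    case (elim e)
    show ?case using M1_mob[OF elim] fp12[OF elim] fp11[OF elim] by blast
  qed
  have d0: "p 0 1 \<noteq> p 0 2" using p_dist(1) by (auto dest: sym)
  have d1: "p 1 2 \<noteq> p 1 1" using p_dist(2) p_eq by simp
  have pc01: "sconv (pe 0 1) (p 0 1) (at_right 0)" by (rule pe_conv) auto
  have pc02: "sconv (pe 0 2) (p 0 2) (at_right 0)" by (rule pe_conv) auto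
  have pc11: "sconv (pe 1 1) (p 1 1) (at_right 0)" by (rule pe_conv) auto
  have pc12: "sconv (pe 1 2) (p 1 2) (at_right 0)" by (rule pe_conv) auto
  note C0 = mob_data[OF ev0 pc01 pc02 d0 mu0]
  note C1 = mob_data[OF ev1 pc12 pc11 d1 mu1]
  obtain lam :: "real \<Rightarrow> complex" where lam: "\<forall>e > 0. lam e \<noteq> 0"
    "((\<lambda>e. msmul (lam e) (mmul (M0 e) (M1 e))) \<longlongrightarrow> M) (at_right 0)" using M_lim by blast
  have evl: "eventually (\<lambda>e. lam e \<noteq> 0) (at_right (0::real))" using epos by eventually_elim (simp add: lam(1))
  have limN: "((\<lambda>e. msmul (lam e) (minv (mmul (M0 e) (M1 e)))) \<longlongrightarrow> minv M) (at_right 0)"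
    unfolding minv_msmul[symmetric] by (rule tendsto_minv[OF lam(2)])
  have dM: "mdet (minv M) \<noteq> 0" using M_mob by simp
  interpret W: wsys p M x "length w" M0 M1 "nrep x" "at_right 0"
  proof
    show "p 0 2 = p 1 2" by (rule p_eq)
    show "p 0 2 \<noteq> p 0 1" "p 0 2 \<noteq> p 1 1" "p 0 1 \<noteq> p 1 1" by (rule p_dist)+
    show "\<And>k i j l s. k \<noteq> 0 \<Longrightarrow> i \<in> {0, 1} \<Longrightarrow> j \<in> {1, 2} \<Longrightarrow> l \<in> {0, 1} \<Longrightarrow> s \<in> {1, 2} \<Longrightarrow>
      (l, s) \<noteq> (i, j) \<Longrightarrow> mob_app (mpow M k) (p i j) \<noteq> p l s" by (rule M_orbit)
    show "\<And>s i j. - int (length w) \<le> s \<Longrightarrow> s \<le> int (length w) \<Longrightarrow> i \<in> {0, 1} \<Longrightarrow> j \<in> {1, 2} \<Longrightarrow>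
      mob_app (mpow M s) x \<noteq> p i j" by (rule x_cond)
    show "mdet M \<noteq> 0" by (rule M_mob)
    show "nrep x \<noteq> (0, 0)" "projv (nrep x) = x" by simp_all
    show "\<And>G q. vconv G q (at_right 0) \<Longrightarrow> vconv (\<lambda>e. mv (mmul (M0 e) (M1 e)) (G e)) (mob_app M q) (at_right 0)"
      by (rule vconv_mat[OF _ lam(2) evl M_mob])
    show "\<And>G q. vconv G q (at_right 0) \<Longrightarrow> vconv (\<lambda>e. mv (minv (mmul (M0 e) (M1 e))) (G e)) (mob_app (minv M) q) (at_right 0)"
      by (rule vconv_mat[OF _ limN evl dM])
    fix l and G :: "real \<Rightarrow> vec" and q
    assume l: "l \<in> Lt" and G: "vconv G q (at_right 0)" and q: "q \<noteq> repp p l"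
    show "vconv (\<lambda>e. mv (letter (M0 e) (M1 e) l) (G e)) (attp p l) (at_right 0)"
      using Lt_cases[OF l]
    proof (elim disjE)
      assume L: "l = (0,1)" show ?thesis using C0(1)[OF G] q unfolding L letter_simps attp_simps repp_simps by blast
    next
      assume L: "l = (0,-1)" show ?thesis using C0(2)[OF G] q unfolding L letter_simps attp_simps repp_simps by blast
    next
      assume L: "l = (1,1)" show ?thesis using C1(1)[OF G] q unfolding L letter_simps attp_simps repp_simps by blast
    next
      assume L: "l = (1,-1)" show ?thesis using C1(2)[OF G] q unfolding L letter_simps attp_simps repp_simps by blast
    qed
  qed
  have isw: "is_word w" using w_red by (simp add: reduced_word_def)
  have wne: "w \<noteq> []" using isw by (simp add: is_word_def)
  obtain l rest where rw: "rev w = l # rest" using wne by (cases "rev w") auto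
  have wr: "w = rev rest @ [l]" using rw by (metis rev_rev_ident rev.simps(2))
  have ll: "last w = l" using wr by simp
  have ncw: "nc (l # rest)" using nc_rev[OF isw] rw by simp
  have LtW: "set (l # rest) \<subseteq> Lt"
  proof
    fix a assume "a \<in> set (l # rest)"
    then have "a \<in> set w" using rw by (metis set_rev)
    then have "fst a \<in> {0,1}" "snd a \<in> {1,-1}" using isw by (auto simp: is_word_def)
    then show "a \<in> Lt" by (cases a) (auto simp: Lt_def)
  qed
  have lenr: "length rest \<le> length w" by (simp add: wr)
  have nb: "rest = [] \<or> \<not> isblk l (hd rest)"
  proof (cases rest)
    case Nil then show ?thesis by simp
  next
    case (Cons h t)
    have n2: "length w \<ge> 2" by (simp add: wr Cons)
    have e1: "w ! (length w - 1) = l" using rw rev_nth[of 0 w] n2 by simp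
    have e2: "w ! (length w - 2) = h" using rw Cons rev_nth[of 1 w] n2 by (simp add: numeral_2_eq_2)
    show ?thesis using w_last[OF n2] e1 e2 Cons by (auto simp: isblk_def)
  qed
  have V: "vconv (st M0 M1 (nrep x) (l # rest)) (attp p l) (at_right 0)"
    by (rule W.final[OF ncw LtW nb]) (use lenr in simp)
  have S: "sconv (\<lambda>e. projv (st M0 M1 (nrep x) (rev w) e)) (attp p (last w)) (at_right 0)"
    using vconv_sconv[OF V] rw ll by simp
  have E: "projv (st M0 M1 (nrep x) (rev w) e) = mob_app (word_mat (M0 e) (M1 e) w) x" for e
    unfolding word_st[symmetric] using mob_app_projv[OF nrep_nz, of "word_mat (M0 e) (M1 e) w" x] by simp
  show ?thesis using S unfolding E attp_def .
qed

end
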